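(* For every integer $n\ge0$, $$\sum_{k=0}^n\frac{\binom{n}{k}(-1)^k}{4k+1}=\frac{1}{4n+1}\cdot\frac{(-1)^n}{\binom{-1/4}{n}},\qquad \sum_{k=0}^n\frac{\binom{n}{k}(-1)^k}{4k+1}H_k=-\frac{1}{4n+1}\cdot\frac{(-1)^n}{\binom{-1/4}{n}}\sum_{k=1}^n\frac{\binom{-1/4}{k}(-1)^k}{k},$$ and $$\sum_{k=0}^n\frac{\binom{n}{k}(-1)^k}{4k+3}=\frac{(-1)^n}{(4n+3)\binom{-3/4}{n}},\qquad \sum_{k=0}^n\frac{\binom{n}{k}(-1)^kH_k}{4k+3}=-\frac{(-1)^n}{(4n+3)\binom{-3/4}{n}}\sum_{k=1}^n\frac{\binom{-3/4}{k}(-1)^k}{k}.$$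
   Context: $H_k=\sum_{i=1}^k1/i$ with $H_0=0$; for rational $a$, $\binom{a}{k}=a(a-1)\cdots(a-k+1)/k!$. *)

theory Defs
  imports Complex_Main
begin

definition H :: "nat \<Rightarrow> rat" where
  "H k = (\<Sum>i=1..k. 1 / of_nat i)"

end

theory Submission
  imports Defs
begin

definition thm8Sw :: "(nat \<Rightarrow> rat) \<Rightarrow> rat \<Rightarrow> rat \<Rightarrow> nat \<Rightarrow> rat" where
  "thm8Sw w d c n = (\<Sum>k=0..n. of_nat (n choose k) * (-1)^k * w k / (d * of_nat k + c))"

lemma thm8key:
  assumes c: "c > 0" and d: "d \<ge> 0"
  shows "(d * of_nat (Suc n) + c) * thm8Sw w d c (Suc n)
     = (\<Sum>k=0..Suc n. of_nat (Suc n choose k) * (-1)^k * w k) + d * of_nat (Suc n) * thm8Sw w d c n"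
proof -
  have pos: "d * of_nat k + c > 0" for k :: nat using c d by (simp add: add_nonneg_pos)
  have e: "of_nat (Suc n choose k) * (-1)^k * w k / (d * of_nat k + c) * (d * of_nat (Suc n) + c)
     = of_nat (Suc n choose k) * (-1)^k * w k
       + d * (of_nat (Suc n - k) * of_nat (Suc n choose k) * (-1)^k * w k / (d * of_nat k + c))"
    if "k \<in> {0..Suc n}" for k
  proof -
    have "k \<le> Suc n" using that by simp
    then have "(of_nat (Suc n - k) :: rat) = of_nat (Suc n) - of_nat k" by (simp add: of_nat_diff)
    then show ?thesis using pos[of k] by (simp add: field_simps)
  qed
  have "(d * of_nat (Suc n) + c) * thm8Sw w d c (Suc n)
     = (\<Sum>k=0..Suc n. of_nat (Suc n choose k) * (-1)^k * w k / (d * of_nat k + c) * (d * of_nat (Suc n) + c))"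
    unfolding thm8Sw_def sum_distrib_left by (rule sum.cong) (simp_all add: mult.commute)
  also have "\<dots> = (\<Sum>k=0..Suc n. of_nat (Suc n choose k) * (-1)^k * w k)
     + d * (\<Sum>k=0..Suc n. of_nat (Suc n - k) * of_nat (Suc n choose k) * (-1)^k * w k / (d * of_nat k + c))"
    by (simp only: sum.cong[OF refl e] sum.distrib sum_distrib_left)
  also have "(\<Sum>k=0..Suc n. of_nat (Suc n - k) * of_nat (Suc n choose k) * (-1)^k * w k / (d * of_nat k + c))
      = (\<Sum>k=0..n. of_nat (Suc n - k) * of_nat (Suc n choose k) * (-1)^k * w k / (d * of_nat k + c))"
    by simp
  also have "\<dots> = (\<Sum>k=0..n. of_nat (Suc n) * (of_nat (n choose k) * (-1)^k * w k / (d * of_nat k + c)))"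
  proof (rule sum.cong)
    fix k assume "k \<in> {0..n}"
    have "(Suc n - k) * (Suc n choose k) = Suc n * (n choose k)"
      using binomial_absorb_comp[of "Suc n" k] by simp
    then have "(of_nat (Suc n - k) :: rat) * of_nat (Suc n choose k) = of_nat (Suc n) * of_nat (n choose k)"
      by (metis of_nat_mult)
    then show "of_nat (Suc n - k) * of_nat (Suc n choose k) * (-1)^k * w k / (d * of_nat k + c)
       = of_nat (Suc n) * (of_nat (n choose k) * (-1)^k * w k / (d * of_nat k + c))"
      by (simp add: mult.assoc)
  qed simp
  finally show ?thesis unfolding thm8Sw_def by (simp add: sum_distrib_left mult.assoc)
qed

lemma A_val: "thm8Sw (\<lambda>_. 1) 1 1 n = 1 / of_nat (Suc n)"
proof (induction n)
  case 0 then show ?case by (simp add: thm8Sw_def)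
next
  case (Suc n)
  have z: "(\<Sum>k=0..Suc n. of_nat (Suc n choose k) * (-1::rat)^k * 1) = 0"
    using choose_alternating_sum[of "Suc n", where 'a=rat]
    by (simp add: atLeast0AtMost mult.commute)
  have "(1 * of_nat (Suc n) + 1) * thm8Sw (\<lambda>_. 1) 1 1 (Suc n) = 1 * of_nat (Suc n) * thm8Sw (\<lambda>_. 1) 1 1 n"
    using thm8key[where c=1 and d=1 and w="\<lambda>_. 1" and n=n] z by simp
  then show ?case using Suc by (simp add: field_simps)
qed

lemma pascal_sum:
  fixes f :: "nat \<Rightarrow> rat"
  shows "(\<Sum>k=0..Suc m. of_nat (Suc m choose k) * f k)
     = (\<Sum>k=0..m. of_nat (m choose k) * f k) + (\<Sum>k=0..m. of_nat (m choose k) * f (Suc k))"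
proof -
  have "(\<Sum>k=0..Suc m. of_nat (Suc m choose k) * f k)
      = f 0 + (\<Sum>k=0..m. of_nat (Suc m choose Suc k) * f (Suc k))"
    by (simp add: sum.atLeast0_atMost_Suc_shift del: sum.cl_ivl_Suc binomial_Suc_Suc)
  also have "\<dots> = f 0 + (\<Sum>k=0..m. of_nat (m choose Suc k) * f (Suc k)) + (\<Sum>k=0..m. of_nat (m choose k) * f (Suc k))"
    by (simp add: distrib_right sum.distrib)
  also have "f 0 + (\<Sum>k=0..m. of_nat (m choose Suc k) * f (Suc k)) = (\<Sum>k=0..Suc m. of_nat (m choose k) * f k)"
    by (simp add: sum.atLeast0_atMost_Suc_shift del: sum.cl_ivl_Suc)
  also have "\<dots> = (\<Sum>k=0..m. of_nat (m choose k) * f k)" by simp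
  finally show ?thesis .
qed

lemma H_Suc: "H (Suc k) = H k + 1 / of_nat (Suc k)"
  by (simp add: H_def)

lemma U_val: "(\<Sum>k=0..Suc m. of_nat (Suc m choose k) * ((-1)^k * H k)) = - 1 / of_nat (Suc m)"
proof -
  have "(\<Sum>k=0..Suc m. of_nat (Suc m choose k) * ((-1)^k * H k))
     = (\<Sum>k=0..m. of_nat (m choose k) * ((-1)^k * H k)) + (\<Sum>k=0..m. of_nat (m choose k) * ((-1)^(Suc k) * H (Suc k)))"
    by (rule pascal_sum)
  also have "(\<Sum>k=0..m. of_nat (m choose k) * ((-1)^(Suc k) * H (Suc k)))
     = - (\<Sum>k=0..m. of_nat (m choose k) * ((-1)^k * H k)) - thm8Sw (\<lambda>_. 1) 1 1 m"
    unfolding thm8Sw_def by (simp add: H_Suc sum.distrib sum_negf[symmetric] algebra_simps add_divide_distrib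
       flip: sum_subtractf)
  finally show ?thesis using A_val[of m] by simp
qed

lemma grec: "(a::rat) gchoose (Suc n) = (a - of_nat n) / of_nat (Suc n) * (a gchoose n)"
  using gbinomial_mult_1[of a n] by (simp add: field_simps)

lemma gnz: assumes "(c::rat) > 0" shows "((- c) / 4) gchoose n \<noteq> 0"
proof (induction n)
  case 0 then show ?case by simp
next
  case (Suc n)
  have "(0::rat) \<le> of_nat n" by simp
  then have "(- c) / 4 - of_nat n \<noteq> 0" using assms by linarith
  then show ?case using Suc by (simp add: grec)
qed

lemma alg1: "(G::rat) \<noteq> 0 \<Longrightarrow> P \<noteq> 0 \<Longrightarrow> P1 \<noteq> 0 \<Longrightarrow> m \<noteq> 0 \<Longrightarrow>
  P1 * ((-1)^Suc n / (P1 * ((- P) / (4 * m) * G))) = 4 * m * ((-1)^n / (P * G))"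
  by (simp add: field_simps)

lemma alg2: "(m::rat) \<noteq> 0 \<Longrightarrow> P * (- Bs * (Q0 + G * s / m)) = - (P * Bs) * Q0 - P * (Bs * G * s) / m"
  by (simp add: field_simps)

lemma alg3: "(G::rat) \<noteq> 0 \<Longrightarrow> P1 \<noteq> 0 \<Longrightarrow> ((-1)^m / (P1 * G)) * G * (-1)^m = 1 / P1"
proof -
  assume a: "G \<noteq> 0" "P1 \<noteq> 0"
  have "(-1::rat)^m * (-1)^m = 1" by (simp flip: power_add)
  then show ?thesis using a by (simp add: field_simps)
qed

definition thm8B :: "rat \<Rightarrow> nat \<Rightarrow> rat" where
  "thm8B c n = (-1)^n / ((4 * of_nat n + c) * (((- c) / 4) gchoose n))"
definition thm8Q :: "rat \<Rightarrow> nat \<Rightarrow> rat" where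
  "thm8Q c n = (\<Sum>k=1..n. (((- c) / 4) gchoose k) * (-1)^k / of_nat k)"

lemma B_rec: assumes c: "c > 0"
  shows "(4 * of_nat (Suc n) + c) * thm8B c (Suc n) = 4 * of_nat (Suc n) * thm8B c n"
    and "thm8B c (Suc n) * (((- c) / 4) gchoose (Suc n)) * (-1)^(Suc n) = 1 / (4 * of_nat (Suc n) + c)"
proof -
  have g: "((- c) / 4) gchoose n \<noteq> 0" "((- c) / 4) gchoose (Suc n) \<noteq> 0" using gnz c by auto
  have "(0::rat) \<le> of_nat n" by simp
  then have p1: "4 * of_nat n + c \<noteq> 0" "4 * of_nat (Suc n) + c \<noteq> 0" using c by simp_all
  have gs: "((- c) / 4) gchoose (Suc n) = (- (4 * of_nat n + c)) / (4 * of_nat (Suc n)) * (((- c) / 4) gchoose n)"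
  proof -
    have "((- c) / 4 - of_nat n) / of_nat (Suc n) = (- (4 * of_nat n + c)) / (4 * of_nat (Suc n))"
      by (simp add: field_simps)
    then show ?thesis by (simp add: grec)
  qed
  show "(4 * of_nat (Suc n) + c) * thm8B c (Suc n) = 4 * of_nat (Suc n) * thm8B c n"
    unfolding thm8B_def gs by (rule alg1) (use g p1 in auto)
  show "thm8B c (Suc n) * (((- c) / 4) gchoose (Suc n)) * (-1)^(Suc n) = 1 / (4 * of_nat (Suc n) + c)"
    unfolding thm8B_def by (rule alg3) (use g p1 in auto)
qed

lemma thm8main: assumes c: "(c::rat) > 0"
  shows "thm8Sw (\<lambda>_. 1) 4 c n = thm8B c n \<and> thm8Sw H 4 c n = - thm8B c n * thm8Q c n"
proof (induction n)
  case 0 then show ?case using c by (simp add: thm8Sw_def thm8B_def thm8Q_def H_def)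
next
  case (Suc n)
  have "(0::rat) \<le> of_nat n" by simp
  then have p: "4 * of_nat (Suc n) + c > 0" using c by simp
  have z: "(\<Sum>k=0..Suc n. of_nat (Suc n choose k) * (-1::rat)^k * 1) = 0"
    using choose_alternating_sum[of "Suc n", where 'a=rat]
    by (simp add: atLeast0AtMost mult.commute)
  have u: "(\<Sum>k=0..Suc n. of_nat (Suc n choose k) * (-1::rat)^k * H k) = - 1 / of_nat (Suc n)"
    using U_val[of n] by (simp add: mult.assoc)
  have k1: "(4 * of_nat (Suc n) + c) * thm8Sw (\<lambda>_. 1) 4 c (Suc n) = 4 * of_nat (Suc n) * thm8Sw (\<lambda>_. 1) 4 c n"
    using thm8key[where c=c and d=4 and w="\<lambda>_. 1" and n=n] c z by simp
  have k2: "(4 * of_nat (Suc n) + c) * thm8Sw H 4 c (Suc n) = - 1 / of_nat (Suc n) + 4 * of_nat (Suc n) * thm8Sw H 4 c n"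
    using thm8key[where c=c and d=4 and w=H and n=n] c u by simp
  have b1: "(4 * of_nat (Suc n) + c) * thm8B c (Suc n) = 4 * of_nat (Suc n) * thm8B c n"
   and b2: "thm8B c (Suc n) * (((- c) / 4) gchoose (Suc n)) * (-1)^(Suc n) = 1 / (4 * of_nat (Suc n) + c)"
    using B_rec c by blast+
  have s1: "thm8Sw (\<lambda>_. 1) 4 c (Suc n) = thm8B c (Suc n)"
    using k1 b1 Suc p by (metis less_irrefl mult_left_cancel)
  have qs: "thm8Q c (Suc n) = thm8Q c n + (((- c) / 4) gchoose (Suc n)) * (-1)^(Suc n) / of_nat (Suc n)"
    unfolding thm8Q_def by simp
  have "(4 * of_nat (Suc n) + c) * thm8Sw H 4 c (Suc n) = (4 * of_nat (Suc n) + c) * (- thm8B c (Suc n) * thm8Q c (Suc n))"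
  proof -
    have "(4 * of_nat (Suc n) + c) * (- thm8B c (Suc n) * thm8Q c (Suc n))
        = - ((4 * of_nat (Suc n) + c) * thm8B c (Suc n)) * thm8Q c n
          - (4 * of_nat (Suc n) + c) * (thm8B c (Suc n) * (((- c) / 4) gchoose (Suc n)) * (-1)^(Suc n)) / of_nat (Suc n)"
      unfolding qs by (rule alg2) simp
    also have "\<dots> = - (4 * of_nat (Suc n) * thm8B c n) * thm8Q c n - 1 / of_nat (Suc n)"
      unfolding b1 b2 using p by simp
    finally show ?thesis using k2 Suc by simp
  qed
  then have s2: "thm8Sw H 4 c (Suc n) = - thm8B c (Suc n) * thm8Q c (Suc n)"
    using p by (metis less_irrefl mult_left_cancel)
  show ?case using s1 s2 by blast
qed

theorem mainTheorem8:
  fixes n :: nat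
  shows "((\<Sum>k=0..n. of_nat (n choose k) * (-1)^k / (4 * of_nat k + 1))
           = 1 / (4 * of_nat n + 1) * ((-1)^n / ((-1/4 :: rat) gchoose n))) \<and>
        ((\<Sum>k=0..n. of_nat (n choose k) * (-1)^k / (4 * of_nat k + 1) * H k)
           = - (1 / (4 * of_nat n + 1) * ((-1)^n / ((-1/4 :: rat) gchoose n)))
             * (\<Sum>k=1..n. ((-1/4 :: rat) gchoose k) * (-1)^k / of_nat k)) \<and>
        ((\<Sum>k=0..n. of_nat (n choose k) * (-1)^k / (4 * of_nat k + 3))
           = (-1)^n / ((4 * of_nat n + 3) * ((-3/4 :: rat) gchoose n))) \<and>
        ((\<Sum>k=0..n. of_nat (n choose k) * (-1)^k * H k / (4 * of_nat k + 3))
           = - ((-1)^n / ((4 * of_nat n + 3) * ((-3/4 :: rat) gchoose n)))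
             * (\<Sum>k=1..n. ((-3/4 :: rat) gchoose k) * (-1)^k / of_nat k))"
proof -
  have m1: "thm8Sw (\<lambda>_. 1) 4 1 n = thm8B 1 n \<and> thm8Sw H 4 1 n = - thm8B 1 n * thm8Q 1 n" by (rule thm8main) simp
  have m3: "thm8Sw (\<lambda>_. 1) 4 3 n = thm8B 3 n \<and> thm8Sw H 4 3 n = - thm8B 3 n * thm8Q 3 n" by (rule thm8main) simp
  have e1: "thm8Sw H 4 1 n = (\<Sum>k=0..n. of_nat (n choose k) * (-1)^k / (4 * of_nat k + 1) * H k)"
    unfolding thm8Sw_def by (rule sum.cong) (simp_all add: field_simps)
  have e3: "thm8Sw H 4 3 n = (\<Sum>k=0..n. of_nat (n choose k) * (-1)^k * H k / (4 * of_nat k + 3))"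
    unfolding thm8Sw_def by simp
  show ?thesis using m1 m3 unfolding e1 e3 by (simp add: thm8Sw_def thm8B_def thm8Q_def)
qed

thm_deps mainTheorem8

end
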